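(* In an operational probabilistic theory satisfying Classical Decomposability and Strong Symmetry, let $\chi$ be an invariant state of a system $\mathrm{A}$ of capacity $d$. Then for every maximal set $\{\psi_1,\dots,\psi_d\}$ of perfectly distinguishable normalized pure states of $\mathrm{A}$, $\chi=\frac1d\sum_{i=1}^d\psi_i$.
   Context: Standing assumptions: finite-dimensional transformation spaces, convex closed sets of transformations. A transformation $\mathcal{T}$ is pure if whenever $\mathcal{T}=\sum_{j\in J_*}\mathcal{S}_j$ for a subset $J_*$ of outcomes of a test $(\mathcal{S}_j)$, then $\mathcal{S}_j=p_j\mathcal{T}$ for a probability distribution $(p_j)$. Pure states $\psi_1,\dots,\psi_k$ are perfectly distinguishable if some measurement (test with trivial output) $(e_j)_{j=1}^k$ satisfies $e_j(\psi_i)=\delta_{ij}$; the capacity $d$ of $\mathrm{A}$ is the largest such $k$, and such a set of size $d$ is maximal. Classical Decomposability: every $\rho\in\mathsf{St}_1(\mathrm{A})$ equals $\sum_{i=1}^dp_i\psi_i$ for some maximal set of perfectly distinguishable pure states and probability distribution $(p_i)$. Strong Symmetry: for any two sets $\{\psi_i\}_{i=1}^n,\{\psi'_i\}_{i=1}^n$ of perfectly distinguishable pure states there is a reversible $\mathcal{T}$ with $\mathcal{T}\psi_i=\psi'_i$ for all $i$. Invariant state: $\chi\in\mathsf{St}_1(\mathrm{A})$ with $\mathcal{U}\chi=\chi$ for all reversible $\mathcal{U}$. *)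

theory Defs
  imports "HOL-Analysis.Analysis"
begin

text \<open>
Model of a single system A of an operational probabilistic theory (OPT).
The real span of the states of A is a finite-dimensional real vector space,
the type 'v (class euclidean_space).
  St    : all states of A (subnormalised), St1 : normalised states of A,
  Prep  : preparation tests of A (tests from the trivial system to A), each a
          finite family of states indexed by its outcomes 0..<length,
  Meas  : measurements of A (tests with trivial output), each a finite family
          of effects indexed by outcomes 0..<length, effects being linear
          functionals,
  Tr    : transformations from A to A, acting as linear maps.
\<close>

definition opt_system ::
  "'v::euclidean_space set \<Rightarrow> 'v set \<Rightarrow> 'v list set \<Rightarrow> ('v \<Rightarrow> real) list set
   \<Rightarrow> ('v \<Rightarrow> 'v) set \<Rightarrow> bool" where
  "opt_system St St1 Prep Meas Tr \<longleftrightarrow>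
     St1 \<subseteq> St \<and> convex St \<and> closed St \<and> convex St1 \<and> closed St1 \<and>
     (\<forall>t\<in>Prep. set t \<subseteq> St) \<and>
     (\<forall>t\<in>Prep. \<forall>\<sigma>. \<sigma> permutes {..<length t} \<longrightarrow> map (\<lambda>j. t ! \<sigma> j) [0..<length t] \<in> Prep) \<and>
     (\<forall>m\<in>Meas. \<forall>e\<in>set m. linear e) \<and>
     (\<forall>m\<in>Meas. \<forall>\<sigma>. \<sigma> permutes {..<length m} \<longrightarrow> map (\<lambda>j. m ! \<sigma> j) [0..<length m] \<in> Meas) \<and>
     (\<forall>T\<in>Tr. linear T \<and> T ` St \<subseteq> St)"

definition pure_state :: "'v::real_vector set \<Rightarrow> 'v list set \<Rightarrow> 'v \<Rightarrow> bool" where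
  "pure_state St Prep \<psi> \<longleftrightarrow> \<psi> \<in> St \<and>
     (\<forall>t\<in>Prep. \<forall>J. J \<subseteq> {..<length t} \<longrightarrow> \<psi> = (\<Sum>j\<in>J. t ! j) \<longrightarrow>
        (\<exists>p::nat \<Rightarrow> real. (\<forall>j\<in>J. 0 \<le> p j) \<and> (\<Sum>j\<in>J. p j) = 1 \<and>
             (\<forall>j\<in>J. t ! j = p j *\<^sub>R \<psi>)))"

definition perf_dist ::
  "'v::real_vector set \<Rightarrow> 'v list set \<Rightarrow> ('v \<Rightarrow> real) list set \<Rightarrow> 'v list \<Rightarrow> bool" where
  "perf_dist St Prep Meas \<psi>s \<longleftrightarrow>
     (\<forall>i<length \<psi>s. pure_state St Prep (\<psi>s ! i)) \<and>
     (\<exists>m\<in>Meas. length m = length \<psi>s \<and>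
        (\<forall>i<length \<psi>s. \<forall>j<length \<psi>s. (m ! j) (\<psi>s ! i) = (if i = j then 1 else 0)))"

definition has_capacity ::
  "'v::real_vector set \<Rightarrow> 'v list set \<Rightarrow> ('v \<Rightarrow> real) list set \<Rightarrow> nat \<Rightarrow> bool" where
  "has_capacity St Prep Meas d \<longleftrightarrow>
     (\<exists>\<psi>s. length \<psi>s = d \<and> perf_dist St Prep Meas \<psi>s) \<and>
     (\<forall>\<psi>s. perf_dist St Prep Meas \<psi>s \<longrightarrow> length \<psi>s \<le> d)"

definition reversible :: "('v \<Rightarrow> 'v) set \<Rightarrow> ('v \<Rightarrow> 'v) \<Rightarrow> bool" where
  "reversible Tr U \<longleftrightarrow> U \<in> Tr \<and> (\<exists>V\<in>Tr. V \<circ> U = id \<and> U \<circ> V = id)"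

definition classical_decomposability ::
  "'v::real_vector set \<Rightarrow> 'v set \<Rightarrow> 'v list set \<Rightarrow> ('v \<Rightarrow> real) list set \<Rightarrow> nat \<Rightarrow> bool" where
  "classical_decomposability St St1 Prep Meas d \<longleftrightarrow>
     (\<forall>\<rho>\<in>St1. \<exists>\<psi>s (p::nat \<Rightarrow> real). length \<psi>s = d \<and> perf_dist St Prep Meas \<psi>s \<and>
        (\<forall>i<d. 0 \<le> p i) \<and> (\<Sum>i<d. p i) = 1 \<and> \<rho> = (\<Sum>i<d. p i *\<^sub>R (\<psi>s ! i)))"

definition strong_symmetry ::
  "'v::real_vector set \<Rightarrow> 'v list set \<Rightarrow> ('v \<Rightarrow> real) list set \<Rightarrow> ('v \<Rightarrow> 'v) set \<Rightarrow> bool" where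
  "strong_symmetry St Prep Meas Tr \<longleftrightarrow>
     (\<forall>\<psi>s \<psi>s'. length \<psi>s = length \<psi>s' \<longrightarrow> perf_dist St Prep Meas \<psi>s \<longrightarrow>
        perf_dist St Prep Meas \<psi>s' \<longrightarrow>
        (\<exists>U. reversible Tr U \<and> (\<forall>i<length \<psi>s. U (\<psi>s ! i) = \<psi>s' ! i)))"

definition invariant_state :: "'v set \<Rightarrow> ('v \<Rightarrow> 'v) set \<Rightarrow> 'v \<Rightarrow> bool" where
  "invariant_state St1 Tr chi \<longleftrightarrow> chi \<in> St1 \<and> (\<forall>U. reversible Tr U \<longrightarrow> U chi = chi)"

end

theory Submission
  imports Defs
begin

lemma perf_dist_perm:
  assumes os: "opt_system St St1 Prep Meas Tr"
    and pd: "perf_dist St Prep Meas xs" and s: "\<sigma> permutes {..<length xs}"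
  shows "perf_dist St Prep Meas (map (\<lambda>i. xs ! \<sigma> i) [0..<length xs])"
proof -
  have sl: "\<And>i. i < length xs \<Longrightarrow> \<sigma> i < length xs" using permutes_in_image[OF s] by auto
  have inj: "\<And>i j. \<sigma> i = \<sigma> j \<Longrightarrow> i = j" using s by (metis permutes_inj injD)
  from pd obtain m where m: "m \<in> Meas" "length m = length xs"
    "\<forall>i<length xs. \<forall>j<length xs. (m ! j) (xs ! i) = (if i = j then 1 else 0)"
    unfolding perf_dist_def by blast
  have pu: "\<forall>i<length xs. pure_state St Prep (xs ! i)" using pd unfolding perf_dist_def by blast
  have "map (\<lambda>j. m ! \<sigma> j) [0..<length m] \<in> Meas"
  proof -
    have "\<forall>m\<in>Meas. \<forall>\<sigma>. \<sigma> permutes {..<length m} \<longrightarrow> map (\<lambda>j. m ! \<sigma> j) [0..<length m] \<in> Meas"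
      using os unfolding opt_system_def by blast
    then show ?thesis using m(1,2) s by metis
  qed
  moreover have "\<forall>i<length xs. pure_state St Prep (map (\<lambda>i. xs ! \<sigma> i) [0..<length xs] ! i)"
    using pu sl by simp
  moreover have "\<forall>i<length xs. \<forall>j<length xs.
      (map (\<lambda>j. m ! \<sigma> j) [0..<length m] ! j) (map (\<lambda>i. xs ! \<sigma> i) [0..<length xs] ! i)
      = (if i = j then 1 else 0)"
  proof (intro allI impI)
    fix i j assume ij: "i < length xs" "j < length xs"
    then have "(map (\<lambda>j. m ! \<sigma> j) [0..<length m] ! j) (map (\<lambda>i. xs ! \<sigma> i) [0..<length xs] ! i)
       = (m ! \<sigma> j) (xs ! \<sigma> i)" using m(2) by simp
    also have "\<dots> = (if \<sigma> i = \<sigma> j then 1 else 0)" using m(3) sl ij by blast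
    also have "\<dots> = (if i = j then 1 else 0)" using inj by metis
    finally show "(map (\<lambda>j. m ! \<sigma> j) [0..<length m] ! j) (map (\<lambda>i. xs ! \<sigma> i) [0..<length xs] ! i)
      = (if i = j then 1 else 0)" .
  qed
  ultimately show ?thesis unfolding perf_dist_def using m(2)
    by (intro conjI bexI[of _ "map (\<lambda>j. m ! \<sigma> j) [0..<length m]"]) simp_all
qed

lemma eff_sum:
  assumes os: "opt_system St St1 Prep Meas Tr" and m: "m \<in> Meas" "length m = length xs"
    "\<forall>i<length xs. \<forall>j<length xs. (m ! j) (xs ! i) = (if i = j then 1 else 0)"
    and j: "j < length xs"
  shows "(m ! j) (\<Sum>i<length xs. c i *\<^sub>R xs ! i) = c j"
proof -
  have lin: "linear (m ! j)" using os m j unfolding opt_system_def by auto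
  have "(m ! j) (\<Sum>i<length xs. c i *\<^sub>R xs ! i) = (\<Sum>i<length xs. c i * (m ! j) (xs ! i))"
    by (simp add: linear_sum[OF lin] linear_scale[OF lin])
  also have "\<dots> = (\<Sum>i<length xs. if i = j then c i else 0)"
    using m(3) j by (intro sum.cong) auto
  also have "\<dots> = c j" using j by simp
  finally show ?thesis .
qed

lemma lin_sum_img:
  assumes "linear U" "\<forall>i<d. U (a ! i) = b ! i"
  shows "U (\<Sum>i<d. c i *\<^sub>R a ! i) = (\<Sum>i<d. c i *\<^sub>R b ! i)"
  using assms by (simp add: linear_sum linear_scale)

theorem mainTheorem15:
  fixes St St1 :: "'v::euclidean_space set"
    and Prep :: "'v list set" and Meas :: "('v \<Rightarrow> real) list set"
    and Tr :: "('v \<Rightarrow> 'v) set" and d :: nat and chi :: 'v and \<psi>s :: "'v list"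
  assumes "opt_system St St1 Prep Meas Tr"
    and "classical_decomposability St St1 Prep Meas d"
    and "strong_symmetry St Prep Meas Tr"
    and "has_capacity St Prep Meas d"
    and "invariant_state St1 Tr chi"
    and "length \<psi>s = d" and "perf_dist St Prep Meas \<psi>s" and "set \<psi>s \<subseteq> St1"
  shows "chi = (1 / real d) *\<^sub>R (\<Sum>i<d. \<psi>s ! i)"
proof -
  note os = assms(1)
  have chiS: "chi \<in> St1" and inv: "\<And>U. reversible Tr U \<Longrightarrow> U chi = chi"
    using assms(5) unfolding invariant_state_def by auto
  obtain \<phi>s p where ph: "length \<phi>s = d" "perf_dist St Prep Meas \<phi>s"
    "\<forall>i<d. 0 \<le> p i" "(\<Sum>i<d. p i) = 1" "chi = (\<Sum>i<d. p i *\<^sub>R (\<phi>s ! i))"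
    using assms(2) chiS unfolding classical_decomposability_def by blast
  have dpos: "d > 0" using ph(4) by (cases d) auto
  from ph(2) obtain m where m: "m \<in> Meas" "length m = length \<phi>s"
    "\<forall>i<length \<phi>s. \<forall>j<length \<phi>s. (m ! j) (\<phi>s ! i) = (if i = j then 1 else 0)"
    unfolding perf_dist_def by blast
  have linrev: "\<And>U. reversible Tr U \<Longrightarrow> linear U"
  proof -
    have "\<forall>T\<in>Tr. linear T \<and> T ` St \<subseteq> St" using os unfolding opt_system_def by blast
    then show "\<And>U. reversible Tr U \<Longrightarrow> linear U" unfolding reversible_def by blast
  qed
  have eq: "p k = p 0" if k: "k < d" for k
  proof -
    let ?\<sigma> = "Transposition.transpose 0 k"
    have s: "?\<sigma> permutes {..<length \<phi>s}" using k dpos ph(1) by (intro permutes_swap_id) auto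
    have pd': "perf_dist St Prep Meas (map (\<lambda>i. \<phi>s ! ?\<sigma> i) [0..<length \<phi>s])"
      by (rule perf_dist_perm[OF os ph(2) s])
    obtain U where U: "reversible Tr U" "\<forall>i<length \<phi>s. U (\<phi>s ! i) = map (\<lambda>i. \<phi>s ! ?\<sigma> i) [0..<length \<phi>s] ! i"
    proof -
      have H: "\<forall>\<psi>s \<psi>s'. length \<psi>s = length \<psi>s' \<longrightarrow> perf_dist St Prep Meas \<psi>s \<longrightarrow>
        perf_dist St Prep Meas \<psi>s' \<longrightarrow>
        (\<exists>U. reversible Tr U \<and> (\<forall>i<length \<psi>s. U (\<psi>s ! i) = \<psi>s' ! i))"
        using assms(3) unfolding strong_symmetry_def by blast
      have L: "length \<phi>s = length (map (\<lambda>i. \<phi>s ! ?\<sigma> i) [0..<length \<phi>s])" by simp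
      from H[rule_format, OF L ph(2) pd'] show ?thesis using that by blast
    qed
    have "U chi = (\<Sum>i<d. p i *\<^sub>R (map (\<lambda>i. \<phi>s ! ?\<sigma> i) [0..<length \<phi>s] ! i))"
      unfolding ph(5) using U ph(1) by (intro lin_sum_img linrev) auto
    also have "\<dots> = (\<Sum>i<d. p (?\<sigma> i) *\<^sub>R (\<phi>s ! i))"
    proof -
      have "(\<Sum>i<d. p i *\<^sub>R (map (\<lambda>i. \<phi>s ! ?\<sigma> i) [0..<length \<phi>s] ! i)) =
            (\<Sum>i<d. p i *\<^sub>R (\<phi>s ! ?\<sigma> i))" using ph(1) by (intro sum.cong) auto
      also have "\<dots> = (\<Sum>i<d. p (?\<sigma> i) *\<^sub>R (\<phi>s ! i))"
        using sum.permute[OF s[unfolded ph(1)], of "\<lambda>i. p (?\<sigma> i) *\<^sub>R (\<phi>s ! i)"]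
        by (simp add: comp_def)
      finally show ?thesis .
    qed
    finally have "(\<Sum>i<d. p (?\<sigma> i) *\<^sub>R (\<phi>s ! i)) = (\<Sum>i<d. p i *\<^sub>R (\<phi>s ! i))"
      using inv[OF U(1)] ph(5) by simp
    then have "(m ! k) (\<Sum>i<d. p (?\<sigma> i) *\<^sub>R (\<phi>s ! i)) = (m ! k) (\<Sum>i<d. p i *\<^sub>R (\<phi>s ! i))"
      by simp
    then show ?thesis using eff_sum[OF os m, of k] k ph(1) by simp
  qed
  have "(\<Sum>i<d. p i) = (\<Sum>i<d. p 0)" by (rule sum.cong[OF refl]) (rule eq, simp)
  then have "(\<Sum>i<d. p i) = real d * p 0" by simp
  then have p0: "p 0 = 1 / real d" using ph(4) dpos by (simp add: field_simps)
  have chi2: "chi = (\<Sum>i<d. (1 / real d) *\<^sub>R (\<phi>s ! i))"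
    unfolding ph(5) by (rule sum.cong[OF refl]) (subst eq, simp, simp add: p0)
  obtain V where V: "reversible Tr V" "\<forall>i<length \<phi>s. V (\<phi>s ! i) = \<psi>s ! i"
  proof -
      have "\<forall>\<psi>s \<psi>s'. length \<psi>s = length \<psi>s' \<longrightarrow> perf_dist St Prep Meas \<psi>s \<longrightarrow>
        perf_dist St Prep Meas \<psi>s' \<longrightarrow>
        (\<exists>U. reversible Tr U \<and> (\<forall>i<length \<psi>s. U (\<psi>s ! i) = \<psi>s' ! i))"
        using assms(3) unfolding strong_symmetry_def by blast
      from this[rule_format, OF _ ph(2) assms(7)] show ?thesis using that ph(1) assms(6) by auto
    qed
  have "V chi = (\<Sum>i<d. (1 / real d) *\<^sub>R (\<psi>s ! i))"
    unfolding chi2 using V ph(1) by (intro lin_sum_img linrev) auto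
  then show ?thesis using inv[OF V(1)] by (simp add: scaleR_sum_right)
qed

end
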